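(* For every integer $d\ge 1$, every $d$-regular graph $G$ has a canonical path partition.
   Context: All graphs are finite, simple and undirected. A path partition of a graph $G=(V,E)$ is a set of vertex-disjoint paths of $G$ (a single vertex is allowed as a path) whose vertex sets together cover $V$; its members are called components. A component with $t\ge 3$ vertices is a cycle component if the subgraph of $G$ induced on its vertex set has a spanning cycle; a component consisting of one vertex is an isolated vertex; every other component is a path component. A path partition of $G$ is canonical if (1) it has the minimum number of components among all path partitions of $G$; (2) among path partitions satisfying (1), it has the maximum number of cycle components; and (3) it has no isolated vertices. *)

theory Defs
  imports Main
begin

definition simple_graph :: "'a set \<Rightarrow> ('a \<Rightarrow> 'a \<Rightarrow> bool) \<Rightarrow> bool" where
  "simple_graph V E \<longleftrightarrow> finite V \<and> (\<forall>x y. E x y \<longrightarrow> E y x) \<and> (\<forall>x. \<not> E x x)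
     \<and> (\<forall>x y. E x y \<longrightarrow> x \<in> V \<and> y \<in> V)"

definition regular :: "'a set \<Rightarrow> ('a \<Rightarrow> 'a \<Rightarrow> bool) \<Rightarrow> nat \<Rightarrow> bool" where
  "regular V E d \<longleftrightarrow> (\<forall>v\<in>V. card {u\<in>V. E v u} = d)"

definition is_path :: "'a set \<Rightarrow> ('a \<Rightarrow> 'a \<Rightarrow> bool) \<Rightarrow> 'a list \<Rightarrow> bool" where
  "is_path V E p \<longleftrightarrow> p \<noteq> [] \<and> distinct p \<and> set p \<subseteq> V
     \<and> (\<forall>i. Suc i < length p \<longrightarrow> E (p ! i) (p ! Suc i))"

definition path_partition :: "'a set \<Rightarrow> ('a \<Rightarrow> 'a \<Rightarrow> bool) \<Rightarrow> 'a list set \<Rightarrow> bool" where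
  "path_partition V E P \<longleftrightarrow> (\<forall>p\<in>P. is_path V E p)
     \<and> (\<forall>p\<in>P. \<forall>q\<in>P. p \<noteq> q \<longrightarrow> set p \<inter> set q = {})
     \<and> (\<Union>p\<in>P. set p) = V"

definition has_spanning_cycle :: "('a \<Rightarrow> 'a \<Rightarrow> bool) \<Rightarrow> 'a set \<Rightarrow> bool" where
  "has_spanning_cycle E S \<longleftrightarrow> (\<exists>c. distinct c \<and> set c = S \<and> 3 \<le> length c
     \<and> (\<forall>i. Suc i < length c \<longrightarrow> E (c ! i) (c ! Suc i))
     \<and> E (last c) (hd c))"

definition cycle_component :: "('a \<Rightarrow> 'a \<Rightarrow> bool) \<Rightarrow> 'a list \<Rightarrow> bool" where
  "cycle_component E p \<longleftrightarrow> 3 \<le> length p \<and> has_spanning_cycle E (set p)"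

definition isolated_vertex :: "'a list \<Rightarrow> bool" where
  "isolated_vertex p \<longleftrightarrow> length p = 1"

definition num_cycle_components :: "('a \<Rightarrow> 'a \<Rightarrow> bool) \<Rightarrow> 'a list set \<Rightarrow> nat" where
  "num_cycle_components E P = card {p\<in>P. cycle_component E p}"

definition canonical_path_partition :: "'a set \<Rightarrow> ('a \<Rightarrow> 'a \<Rightarrow> bool) \<Rightarrow> 'a list set \<Rightarrow> bool" where
  "canonical_path_partition V E P \<longleftrightarrow>
     path_partition V E P
     \<and> (\<forall>Q. path_partition V E Q \<longrightarrow> card P \<le> card Q)
     \<and> (\<forall>Q. path_partition V E Q \<and> card Q = card P
            \<longrightarrow> num_cycle_components E Q \<le> num_cycle_components E P)
     \<and> (\<forall>p\<in>P. \<not> isolated_vertex p)"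

end

theory Submission
  imports Defs
begin


lemma is_path_succ: "is_path V E p \<longleftrightarrow> p \<noteq> [] \<and> distinct p \<and> set p \<subseteq> V \<and> successively E p"
  unfolding is_path_def successively_conv_nth by blast

lemma pp_finite:
  assumes "path_partition V E Q" "finite V"
  shows "finite Q"
proof -
  have "Q \<subseteq> {xs. set xs \<subseteq> V \<and> length xs \<le> card V}"
  proof
    fix p assume "p \<in> Q"
    then have "is_path V E p" using assms unfolding path_partition_def by blast
    then have "set p \<subseteq> V" "distinct p" unfolding is_path_def by auto
    moreover have "card (set p) \<le> card V" using card_mono[OF assms(2)] \<open>set p \<subseteq> V\<close> by blast
    ultimately show "p \<in> {xs. set xs \<subseteq> V \<and> length xs \<le> card V}"
      using distinct_card[of p] by simp
  qed
  moreover have "finite {xs. set xs \<subseteq> V \<and> length xs \<le> card V}"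
    using finite_lists_length_le[OF assms(2)] by simp
  ultimately show ?thesis by (rule finite_subset)
qed

lemma pp_unique:
  assumes "path_partition V E Q" "p \<in> Q" "q \<in> Q" "x \<in> set p" "x \<in> set q"
  shows "p = q"
  using assms unfolding path_partition_def by blast



lemma replace_pp:
  assumes pp: "path_partition V E Q" and R: "R \<subseteq> Q"
    and Sp: "\<forall>s\<in>S. is_path V E s"
    and Sd: "\<forall>s\<in>S. \<forall>t\<in>S. s \<noteq> t \<longrightarrow> set s \<inter> set t = {}"
    and U: "(\<Union>s\<in>S. set s) = (\<Union>r\<in>R. set r)"
  shows "path_partition V E ((Q - R) \<union> S)" "(Q - R) \<inter> S = {}"
proof -
  have Qp: "\<forall>p\<in>Q. is_path V E p" and Qd: "\<forall>p\<in>Q. \<forall>q\<in>Q. p \<noteq> q \<longrightarrow> set p \<inter> set q = {}"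
    and Qc: "(\<Union>p\<in>Q. set p) = V" using pp unfolding path_partition_def by auto
  have dis: "set q \<inter> set s = {}" if q: "q \<in> Q - R" and s: "s \<in> S" for q s
  proof (rule equals0I)
    fix x assume x: "x \<in> set q \<inter> set s"
    then have "x \<in> (\<Union>s\<in>S. set s)" using s by blast
    then have "x \<in> (\<Union>r\<in>R. set r)" by (simp only: U)
    then obtain r where r: "r \<in> R" "x \<in> set r" by blast
    have "q \<noteq> r" using q r by blast
    moreover have "q \<in> Q" "r \<in> Q" using q r R by auto
    ultimately have "set q \<inter> set r = {}" using Qd by blast
    then show False using x r by blast
  qed
  show "(Q - R) \<inter> S = {}"
  proof (rule equals0I)
    fix s assume "s \<in> (Q - R) \<inter> S"
    then have "s \<in> Q - R" "s \<in> S" by auto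
    from dis[OF this] have "set s = {}" by simp
    moreover have "s \<noteq> []" using Sp \<open>s \<in> S\<close> unfolding is_path_def by blast
    ultimately show False by simp
  qed
  have cov: "(\<Union>p\<in>(Q - R) \<union> S. set p) = V"
  proof -
    have "(\<Union>p\<in>(Q - R) \<union> S. set p) = (\<Union>p\<in>Q - R. set p) \<union> (\<Union>s\<in>S. set s)" by (rule UN_Un)
    also have "\<dots> = (\<Union>p\<in>Q - R. set p) \<union> (\<Union>r\<in>R. set r)" by (simp only: U)
    also have "\<dots> = (\<Union>p\<in>(Q - R) \<union> R. set p)" by (rule UN_Un[symmetric])
    also have "(Q - R) \<union> R = Q" using R by blast
    finally show ?thesis using Qc by simp
  qed
  show "path_partition V E ((Q - R) \<union> S)"
    unfolding path_partition_def
  proof (intro conjI)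
    show "\<forall>p\<in>Q - R \<union> S. is_path V E p" using Qp Sp by blast
    show "\<forall>p\<in>Q - R \<union> S. \<forall>q\<in>Q - R \<union> S. p \<noteq> q \<longrightarrow> set p \<inter> set q = {}"
    proof (intro ballI impI)
      fix p q assume pq: "p \<in> Q - R \<union> S" "q \<in> Q - R \<union> S" "p \<noteq> q"
      show "set p \<inter> set q = {}"
      proof (cases "p \<in> S")
        case True
        show ?thesis
        proof (cases "q \<in> S")
          case True
          then show ?thesis using Sd \<open>p \<in> S\<close> pq(3) by blast
        next
          case False
          then have "q \<in> Q - R" using pq(2) by blast
          from dis[OF this \<open>p \<in> S\<close>] show ?thesis by blast
        qed
      next
        case False
        then have p: "p \<in> Q - R" using pq(1) by blast
        show ?thesis
        proof (cases "q \<in> S")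
          case True
          from dis[OF p True] show ?thesis by blast
        next
          case False
          then have "q \<in> Q - R" using pq(2) by blast
          then show ?thesis using Qd p pq(3) by blast
        qed
      qed
    qed
  qed (rule cov)
qed


lemma replace_sum:
  fixes f :: "'b \<Rightarrow> nat"
  assumes "finite Q" "finite S" "R \<subseteq> Q" "(Q - R) \<inter> S = {}"
  shows "(\<Sum>x\<in>(Q - R) \<union> S. f x) + (\<Sum>x\<in>R. f x) = (\<Sum>x\<in>Q. f x) + (\<Sum>x\<in>S. f x)"
proof -
  have "(\<Sum>x\<in>(Q - R) \<union> S. f x) = (\<Sum>x\<in>Q - R. f x) + (\<Sum>x\<in>S. f x)"
    using assms by (intro sum.union_disjoint) auto
  moreover have "(\<Sum>x\<in>Q. f x) = (\<Sum>x\<in>Q - R. f x) + (\<Sum>x\<in>R. f x)"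
    using assms by (intro sum.subset_diff) auto
  ultimately show ?thesis by simp
qed

lemma card_filter_sum: "finite A \<Longrightarrow> card {x\<in>A. P x} = (\<Sum>x\<in>A. if P x then 1 else 0)"
  by (simp add: sum.inter_filter[symmetric])



lemma cyc3:
  assumes "cycle_component E [a,u,b]" "\<forall>x y. E x y \<longrightarrow> E y x" "distinct [a,u,b]"
  shows "E a b"
proof -
  obtain c where c: "distinct c" "set c = {a,u,b}" 
     "\<forall>i. Suc i < length c \<longrightarrow> E (c ! i) (c ! Suc i)" "E (last c) (hd c)"
    using assms(1) unfolding cycle_component_def has_spanning_cycle_def by auto
  have "length c = card {a,u,b}" using distinct_card[OF c(1)] c(2) by simp
  also have "card {a,u,b} = 3" using assms(3) by simp
  finally have "length c = 3" .
  then obtain c0 c1 c2 where cc: "c = [c0,c1,c2]"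
    by (auto simp: numeral_3_eq_3 length_Suc_conv)
  have e1: "E c0 c1" using c(3)[rule_format, of 0] cc by simp
  have e2: "E c1 c2" using c(3)[rule_format, of 1] cc by simp
  have e3: "E c2 c0" using c(4) cc by simp
  have s: "E c1 c0" "E c2 c1" "E c0 c2" using e1 e2 e3 assms(2) by blast+
  have ab: "a \<in> {c0,c1,c2}" "b \<in> {c0,c1,c2}" "a \<noteq> b" using c(2) cc assms(3) by auto
  show ?thesis using ab e1 e2 e3 s by auto
qed

lemma cyc3I:
  assumes "E a u" "E u b" "E b a" "distinct [a,u,b]"
  shows "cycle_component E [a,u,b]"
  unfolding cycle_component_def has_spanning_cycle_def
proof (intro conjI exI[of _ "[a,u,b]"])
  show "\<forall>i. Suc i < length [a, u, b] \<longrightarrow> E ([a, u, b] ! i) ([a, u, b] ! Suc i)"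
  proof (intro allI impI)
    fix i assume "Suc i < length [a,u,b]"
    then have "i = 0 \<or> i = 1" by auto
    then show "E ([a, u, b] ! i) ([a, u, b] ! Suc i)" using assms by auto
  qed
qed (use assms in auto)


lemma succ_split:
  "successively E (xs @ y # ys) \<longleftrightarrow> successively E (xs @ [y]) \<and> successively E (y # ys)"
proof -
  have "successively E (xs @ y # ys) = successively E ((xs @ [y]) @ ys)" by simp
  also have "\<dots> \<longleftrightarrow> successively E (xs @ [y]) \<and> successively E ys \<and> (ys = [] \<or> E y (hd ys))"
    by (simp only: successively_append_iff) simp
  also have "\<dots> \<longleftrightarrow> successively E (xs @ [y]) \<and> successively E (y # ys)"
    by (cases ys) auto
  finally show ?thesis .
qed

lemma succ_snoc: "successively E (xs @ [y]) \<longleftrightarrow> successively E xs \<and> (xs = [] \<or> E (last xs) y)"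
  by (simp only: successively_append_iff) simp

lemma succ_rot:
  assumes "successively E (c1 @ u # c2)" "c1 \<noteq> [] \<Longrightarrow> E (last (u # c2)) (hd c1)"
  shows "successively E (u # c2 @ c1)"
proof -
  have h: "successively E (c1 @ [u]) \<and> successively E (u # c2)"
    by (rule succ_split[THEN iffD1, OF assms(1)])
  have h2: "successively E c1" using succ_snoc[THEN iffD1, OF conjunct1[OF h]] by (rule conjunct1)
  have "successively E ((u # c2) @ c1)"
    unfolding successively_append_iff using h h2 assms(2) by blast
  then show ?thesis by simp
qed




locale G =
  fixes V :: "'a set" and E :: "'a \<Rightarrow> 'a \<Rightarrow> bool" and d :: nat
  assumes d1: "1 \<le> d" and sg: "simple_graph V E" and reg: "regular V E d"
begin

lemma finV: "finite V" using sg unfolding simple_graph_def by blast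
lemma symE: "E x y \<Longrightarrow> E y x" using sg unfolding simple_graph_def by blast
lemma irrE: "\<not> E x x" using sg unfolding simple_graph_def by blast
lemma inV1: "E x y \<Longrightarrow> x \<in> V" using sg unfolding simple_graph_def by blast
lemma inV2: "E x y \<Longrightarrow> y \<in> V" using sg unfolding simple_graph_def by blast
lemma symE': "\<forall>x y. E x y \<longrightarrow> E y x" using symE by blast

definition cI :: "'a list \<Rightarrow> nat" where "cI p = (if cycle_component E p then 1 else 0)"
definition iI :: "'a list \<Rightarrow> nat" where "iI p = (if length p = 1 then 1 else 0)"
definition niso :: "'a list set \<Rightarrow> nat" where "niso Q = card {p\<in>Q. length p = 1}"

definition "Opt1 Q \<longleftrightarrow> path_partition V E Q \<and> (\<forall>Q'. path_partition V E Q' \<longrightarrow> card Q \<le> card Q')"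
definition "Opt2 Q \<longleftrightarrow> Opt1 Q \<and> (\<forall>Q'. Opt1 Q' \<longrightarrow> num_cycle_components E Q' \<le> num_cycle_components E Q)"
definition "Opt3 Q \<longleftrightarrow> Opt2 Q \<and> (\<forall>Q'. Opt2 Q' \<longrightarrow> niso Q \<le> niso Q')"

lemma ncc_sum: "finite Q \<Longrightarrow> num_cycle_components E Q = sum cI Q"
  unfolding num_cycle_components_def cI_def by (rule card_filter_sum)
lemma niso_sum: "finite Q \<Longrightarrow> niso Q = sum iI Q"
  unfolding niso_def iI_def by (rule card_filter_sum)

lemma Opt3_pp: "Opt3 Q \<Longrightarrow> path_partition V E Q"
  unfolding Opt3_def Opt2_def Opt1_def by blast

lemma repl_all:
  assumes pp: "path_partition V E Q" and R: "R \<subseteq> Q" and fS: "finite S"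
    and Sp: "\<forall>s\<in>S. is_path V E s"
    and Sd: "\<forall>s\<in>S. \<forall>t\<in>S. s \<noteq> t \<longrightarrow> set s \<inter> set t = {}"
    and U: "(\<Union>s\<in>S. set s) = (\<Union>r\<in>R. set r)"
  shows "path_partition V E ((Q - R) \<union> S)"
    "card ((Q - R) \<union> S) + card R = card Q + card S"
    "num_cycle_components E ((Q - R) \<union> S) + sum cI R = num_cycle_components E Q + sum cI S"
    "niso ((Q - R) \<union> S) + sum iI R = niso Q + sum iI S"
proof -
  define Q2 where "Q2 = (Q - R) \<union> S"
  show pp2: "path_partition V E ((Q - R) \<union> S)" by (rule replace_pp(1)[OF pp R Sp Sd U])
  have dj: "(Q - R) \<inter> S = {}" by (rule replace_pp(2)[OF pp R Sp Sd U])
  have fQ: "finite Q" using pp_finite[OF pp finV] .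
  have fQ2: "finite Q2" using pp_finite[OF pp2 finV] unfolding Q2_def .
  have fR: "finite R" using fQ R finite_subset by blast
  note rs = replace_sum[OF fQ fS R dj]
  show "card ((Q - R) \<union> S) + card R = card Q + card S"
    using rs[of "\<lambda>_. 1"] by (simp add: Q2_def)
  show "num_cycle_components E ((Q - R) \<union> S) + sum cI R = num_cycle_components E Q + sum cI S"
    using rs[of cI] ncc_sum[OF fQ2] ncc_sum[OF fQ] by (simp add: Q2_def)
  show "niso ((Q - R) \<union> S) + sum iI R = niso Q + sum iI S"
    using rs[of iI] niso_sum[OF fQ2] niso_sum[OF fQ] by (simp add: Q2_def)
qed

lemma ncc_le_card: "path_partition V E Q \<Longrightarrow> num_cycle_components E Q \<le> card Q"
  unfolding num_cycle_components_def
  by (rule card_mono) (auto intro: pp_finite finV)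

lemma singles_pp: "path_partition V E ((\<lambda>v. [v]) ` V)"
  unfolding path_partition_def is_path_def by auto

lemma ex_Opt3: "\<exists>P. Opt3 P"
proof -
  obtain Q1 where Q1: "path_partition V E Q1" "\<forall>Q'. path_partition V E Q' \<longrightarrow> card Q1 \<le> card Q'"
    using ex_has_least_nat[of "path_partition V E" _ card, OF singles_pp] by blast
  then have o1: "Opt1 Q1" unfolding Opt1_def by blast
  have cardeq: "Opt1 Q \<Longrightarrow> card Q = card Q1" for Q using Q1 unfolding Opt1_def by (meson le_antisym)
  obtain Q2 where Q2: "Opt1 Q2" "\<forall>Q'. Opt1 Q' \<longrightarrow> card Q1 - num_cycle_components E Q2 \<le> card Q1 - num_cycle_components E Q'"
    using ex_has_least_nat[of Opt1 Q1 "\<lambda>Q. card Q1 - num_cycle_components E Q", OF o1] by blast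
  have o2: "Opt2 Q2" unfolding Opt2_def
  proof (intro conjI allI impI)
    fix Q' assume "Opt1 Q'"
    with Q2 have "card Q1 - num_cycle_components E Q2 \<le> card Q1 - num_cycle_components E Q'" by blast
    moreover have "num_cycle_components E Q' \<le> card Q1" using ncc_le_card cardeq \<open>Opt1 Q'\<close> unfolding Opt1_def by metis
    moreover have "num_cycle_components E Q2 \<le> card Q1" using ncc_le_card cardeq Q2(1) unfolding Opt1_def by metis
    ultimately show "num_cycle_components E Q' \<le> num_cycle_components E Q2" by linarith
  qed (rule Q2(1))
  obtain Q3 where "Opt2 Q3" "\<forall>Q'. Opt2 Q' \<longrightarrow> niso Q3 \<le> niso Q'"
    using ex_has_least_nat[of Opt2 Q2 niso, OF o2] by blast
  then show ?thesis unfolding Opt3_def by blast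
qed

lemma Opt2_better:
  assumes "Opt2 Q" "path_partition V E Q2" "card Q2 \<le> card Q"
    "num_cycle_components E Q \<le> num_cycle_components E Q2"
  shows "Opt2 Q2"
  using assms unfolding Opt2_def Opt1_def by (meson order_trans)

lemma Opt2_ncc: "Opt2 Q \<Longrightarrow> Opt2 Q2 \<Longrightarrow> num_cycle_components E Q2 \<le> num_cycle_components E Q"
  unfolding Opt2_def by blast

lemma Opt3_niso: "Opt3 Q \<Longrightarrow> Opt2 Q2 \<Longrightarrow> niso Q \<le> niso Q2"
  unfolding Opt3_def by blast

lemma Opt3_better: "Opt3 Q \<Longrightarrow> Opt2 Q2 \<Longrightarrow> niso Q2 \<le> niso Q \<Longrightarrow> Opt3 Q2"
  unfolding Opt3_def by (meson order_trans)

lemma Opt1_card: "Opt3 Q \<Longrightarrow> path_partition V E Q2 \<Longrightarrow> card Q \<le> card Q2"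
  unfolding Opt3_def Opt2_def Opt1_def by blast

lemma comp_path: "path_partition V E Q \<Longrightarrow> p \<in> Q \<Longrightarrow> is_path V E p"
  unfolding path_partition_def by blast

lemma comp_cover: "path_partition V E Q \<Longrightarrow> x \<in> V \<Longrightarrow> \<exists>p\<in>Q. x \<in> set p"
  unfolding path_partition_def by blast

end


context G begin

lemma nbr:
  assumes o3: "Opt3 Q" and vQ: "[v] \<in> Q" and vu: "E v u"
  shows "\<exists>a b. [a,u,b] \<in> Q \<and> \<not> E a b"
proof -
  have pp: "path_partition V E Q" using Opt3_pp[OF o3] .
  have o2: "Opt2 Q" using o3 unfolding Opt3_def by blast
  have uV: "u \<in> V" "v \<in> V" using inV1[OF vu] inV2[OF vu] by auto
  obtain p where p: "p \<in> Q" "u \<in> set p" using comp_cover[OF pp uV(1)] by blast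
  have uv: "u \<noteq> v" using vu irrE by blast
  have pv: "p \<noteq> [v]" using p uv by auto
  have vp: "v \<notin> set p"
  proof
    assume "v \<in> set p"
    then have "p = [v]" using pp_unique[OF pp p(1) vQ] by simp
    with pv show False by simp
  qed
  have ip: "is_path V E p" using comp_path[OF pp p(1)] .
  then have pd: "distinct p" and ps: "successively E p" and pV: "set p \<subseteq> V" and pne: "p \<noteq> []"
    unfolding is_path_succ by auto
  define R where "R = {[v], p}"
  have R: "R \<subseteq> Q" using p vQ unfolding R_def by blast
  have cR: "card R = 2" using pv unfolding R_def by simp
  have UR: "(\<Union>r\<in>R. set r) = insert v (set p)" unfolding R_def by simp
  have cIv: "cI [v] = 0" unfolding cI_def cycle_component_def by simp
  have iIv: "iI [v] = 1" unfolding iI_def by simp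
  have merge: False if q: "is_path V E q" "set q = insert v (set p)" for q
  proof -
    note ra = repl_all[OF pp R, of "{q}"]
    have "card ((Q - R) \<union> {q}) + 2 = card Q + 1"
      using ra(2) q cR UR by simp
    moreover have "card Q \<le> card ((Q - R) \<union> {q})"
      using Opt1_card[OF o3 ra(1)] q UR by simp
    ultimately show False by simp
  qed
  have split: False if q: "is_path V E q1" "is_path V E q2" "set q1 \<inter> set q2 = {}"
    "set q1 \<union> set q2 = insert v (set p)" "\<not> cycle_component E p" "length q1 \<noteq> 1" "length q2 \<noteq> 1"
    for q1 q2
  proof -
    have q12: "q1 \<noteq> q2" using q(1,3) unfolding is_path_def by auto
    have Sd: "\<forall>s\<in>{q1,q2}. \<forall>t\<in>{q1,q2}. s \<noteq> t \<longrightarrow> set s \<inter> set t = {}" using q(3) by blast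
    have U: "(\<Union>s\<in>{q1,q2}. set s) = (\<Union>r\<in>R. set r)" using q(4) UR by simp
    note ra = repl_all[OF pp R _ _ Sd U]
    define Q2 where "Q2 = (Q - R) \<union> {q1,q2}"
    have pp2: "path_partition V E Q2" using ra(1) q unfolding Q2_def by simp
    have "card Q2 + 2 = card Q + 2" using ra(2) q q12 cR unfolding Q2_def by simp
    then have c2: "card Q2 \<le> card Q" by simp
    have cIp: "cI p = 0" using q(5) unfolding cI_def by simp
    have sR: "sum cI R = 0" "sum iI R = 1 + iI p" using cIp cIv iIv pv unfolding R_def by simp_all
    have "num_cycle_components E Q2 + 0 = num_cycle_components E Q + sum cI {q1,q2}"
      using ra(3) q sR unfolding Q2_def by simp
    then have n2: "num_cycle_components E Q \<le> num_cycle_components E Q2" by simp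
    have o2': "Opt2 Q2" by (rule Opt2_better[OF o2 pp2 c2 n2])
    have "niso Q2 + (1 + iI p) = niso Q + sum iI {q1,q2}"
      using ra(4) q sR unfolding Q2_def by simp
    moreover have "sum iI {q1,q2} = 0" using q(6,7) q12 unfolding iI_def by simp
    ultimately have "niso Q2 < niso Q" by simp
    with Opt3_niso[OF o3 o2'] show False by simp
  qed
  show ?thesis
  proof (cases "cycle_component E p")
    case True
    then obtain c where c: "distinct c" "set c = set p"
      "\<forall>i. Suc i < length c \<longrightarrow> E (c ! i) (c ! Suc i)" "E (last c) (hd c)"
      unfolding cycle_component_def has_spanning_cycle_def by blast
    have cs: "successively E c" using c(3) unfolding successively_conv_nth by blast
    obtain c1 c2 where cc: "c = c1 @ u # c2" using split_list[of u c] c(2) p(2) by blast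
    define q where "q = v # u # c2 @ c1"
    have sq: "set q = insert v (set p)" using c(2) cc unfolding q_def by auto
    have s2: "c1 \<noteq> [] \<Longrightarrow> E (last (u # c2)) (hd c1)"
      using c(4) unfolding cc by simp
    have "successively E (u # c2 @ c1)"
      by (rule succ_rot[OF cs[unfolded cc] s2])
    then have "successively E q" unfolding q_def using vu by (simp add: successively_Cons)
    moreover have "distinct q" using c(1) vp c(2) unfolding q_def cc by auto
    moreover have "set q \<subseteq> V" using sq pV uV by auto
    ultimately have "is_path V E q" unfolding is_path_succ q_def by simp
    with merge sq show ?thesis by blast
  next
    case False
    obtain p1 p2 where pp12: "p = p1 @ u # p2" using split_list[OF p(2)] by blast
    have sp12: "successively E (p1 @ [u]) \<and> successively E (u # p2)"
      by (rule succ_split[THEN iffD1, OF ps[unfolded pp12]])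
    have sp3: "successively E p1" using succ_snoc[THEN iffD1, OF conjunct1[OF sp12]] by (rule conjunct1)
    have sp: "successively E (p1 @ [u])" "successively E (u # p2)" "successively E p1"
      using sp12 sp3 by auto
    have dd: "distinct (p1 @ [u])" "distinct (u # p2)" "set p1 \<inter> set (u # p2) = {}"
      using pd unfolding pp12 by auto
    show ?thesis
    proof (cases "p1 = []")
      case True
      have "successively E (v # u # p2)" using sp(2) vu by simp
      then have "is_path V E (v # p)" using pd pV vp uV unfolding is_path_succ pp12 True
        by auto
      then show ?thesis using merge[of "v # p"] by simp
    next
      case p1n: False
      show ?thesis
      proof (cases "p2 = []")
        case True
        have "successively E (p @ [v])"
          by (rule succ_snoc[THEN iffD2]) (use ps symE[OF vu] pp12 True in simp)
        then have "is_path V E (p @ [v])" using pd pV vp uV unfolding is_path_succ by auto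
        then show ?thesis using merge[of "p @ [v]"] by simp
      next
        case p2n: False
        show ?thesis
        proof (cases "2 \<le> length p1")
          case True
          have i1: "is_path V E p1" using sp(3) dd pV p1n unfolding is_path_succ pp12 by auto
          have "successively E (v # u # p2)" using sp(2) vu by simp
          then have i2: "is_path V E (v # u # p2)" using dd pV vp uV
            unfolding is_path_succ pp12 by auto
          have False
            by (rule split[OF i1 i2]) (use dd vp pp12 True False in auto)
          then show ?thesis by simp
        next
          case l1: False
          show ?thesis
          proof (cases "2 \<le> length p2")
            case True
            have "successively E ((p1 @ [u]) @ [v])"
              by (rule succ_snoc[THEN iffD2]) (use sp(1) symE[OF vu] in simp)
            then have sv: "successively E (p1 @ [u, v])" by simp
            have i1: "is_path V E (p1 @ [u, v])" using sv dd pV vp uV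
              unfolding is_path_succ pp12 by auto
            have sp2: "successively E p2" using sp(2) by (cases p2) auto
            have i2: "is_path V E p2" using sp2 dd pV p2n unfolding is_path_succ pp12 by auto
            have False
              by (rule split[OF i1 i2]) (use dd vp pp12 True False pd in auto)
            then show ?thesis by simp
          next
            case l2: False
            have "length p1 \<noteq> 0" using p1n by simp
            then have "length p1 = Suc 0" using l1 by linarith
            then obtain a where a: "p1 = [a]" by (auto simp: length_Suc_conv)
            have "length p2 \<noteq> 0" using p2n by simp
            then have "length p2 = Suc 0" using l2 by linarith
            then obtain b where b: "p2 = [b]" by (auto simp: length_Suc_conv)
            have pe: "p = [a,u,b]" using pp12 a b by simp
            have "\<not> E a b"
            proof
              assume ab: "E a b"
              have "E a u" "E u b" using ps unfolding pe by auto
              then have "cycle_component E [a,u,b]" using cyc3I[of E a u b] ab symE pd pe by auto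
              with False pe show False by simp
            qed
            then show ?thesis using p(1) pe by blast
          qed
        qed
      qed
    qed
  qed
qed

end


context G begin

definition M :: "'a list set \<Rightarrow> 'a set" where
  "M Q = {u. \<exists>a b. [a,u,b] \<in> Q \<and> \<not> E a b}"

lemma swap:
  assumes o3: "Opt3 Q" and zQ: "[z] \<in> Q" and zu: "E z u" and pQ: "p \<in> Q"
    and pe: "p = [a,u,b] \<or> p = [b,u,a]" and nab: "\<not> E a b"
  shows "Opt3 ((Q - {[z], p}) \<union> {[a], [z,u,b]})"
    "M ((Q - {[z], p}) \<union> {[a], [z,u,b]}) = M Q"
    "\<forall>q\<in>Q. q \<noteq> [z] \<longrightarrow> q \<noteq> p \<longrightarrow> q \<in> (Q - {[z], p}) \<union> {[a], [z,u,b]}"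
proof -
  define Q' where "Q' = (Q - {[z], p}) \<union> {[a], [z,u,b]}"
  have pp: "path_partition V E Q" using Opt3_pp[OF o3] .
  have o2: "Opt2 Q" using o3 unfolding Opt3_def by blast
  have ip: "is_path V E p" using comp_path[OF pp pQ] .
  have dp: "distinct [a,u,b]" using ip pe unfolding is_path_def by auto
  have eau: "E a u" "E u b"
    using ip pe symE unfolding is_path_succ by auto
  have abV: "a \<in> V" "u \<in> V" "b \<in> V" "z \<in> V" using inV1 inV2 eau zu by blast+
  have zp: "z \<notin> set p"
  proof
    assume "z \<in> set p"
    then have "p = [z]" using pp_unique[OF pp pQ zQ] by simp
    with pe show False by auto
  qed
  then have zab: "z \<noteq> a" "z \<noteq> u" "z \<noteq> b" using pe by auto
  have pz: "p \<noteq> [z]" using pe by auto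
  define R where "R = {[z], p}"
  have R: "R \<subseteq> Q" using zQ pQ unfolding R_def by blast
  have Sp: "\<forall>s\<in>{[a], [z,u,b]}. is_path V E s"
    using abV eau zu dp zab unfolding is_path_succ by auto
  have Sd: "\<forall>s\<in>{[a], [z,u,b]}. \<forall>t\<in>{[a], [z,u,b]}. s \<noteq> t \<longrightarrow> set s \<inter> set t = {}"
    using dp zab by auto
  have U: "(\<Union>s\<in>{[a], [z,u,b]}. set s) = (\<Union>r\<in>R. set r)"
    unfolding R_def using pe by auto
  note ra = repl_all[OF pp R _ Sp Sd U]
  have pp2: "path_partition V E Q'" using ra(1) unfolding Q'_def R_def by simp
  have ne: "[a] \<noteq> [z,u,b]" by simp
  have "card Q' + 2 = card Q + 2" using ra(2) pz ne unfolding Q'_def R_def by simp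
  then have c2: "card Q' \<le> card Q" by simp
  have cIp: "cI p = 0"
  proof (rule ccontr)
    assume "cI p \<noteq> 0"
    then have cp: "cycle_component E p" unfolding cI_def by (simp split: if_splits)
    show False
    proof (cases "p = [a,u,b]")
      case True
      then show False using cyc3[of E a u b] cp symE' dp nab by simp
    next
      case False
      then have "p = [b,u,a]" using pe by simp
      then have "E b a" using cyc3[of E b u a] cp symE' dp by auto
      then show False using nab symE by blast
    qed
  qed
  have cIz: "cI [z] = 0" "cI [a] = 0" unfolding cI_def cycle_component_def by simp_all
  have iIz: "iI [z] = 1" "iI [a] = 1" "iI p = 0" "iI [z,u,b] = 0" unfolding iI_def using pe by auto
  have n: "num_cycle_components E Q' + 0 = num_cycle_components E Q + cI [z,u,b]"
    using ra(3) cIp cIz pz ne unfolding Q'_def R_def by simp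
  then have n2: "num_cycle_components E Q \<le> num_cycle_components E Q'" by simp
  have o2': "Opt2 Q'" by (rule Opt2_better[OF o2 pp2 c2 n2])
  have "num_cycle_components E Q' \<le> num_cycle_components E Q" by (rule Opt2_ncc[OF o2 o2'])
  with n have "cI [z,u,b] = 0" by simp
  then have nzb: "\<not> E z b"
    using cyc3I[of E z u b] zu eau dp zab symE unfolding cI_def by auto
  have "niso Q' + 1 = niso Q + 1"
    using ra(4) iIz pz ne unfolding Q'_def R_def by simp
  then have "niso Q' \<le> niso Q" by simp
  show "Opt3 Q'" by (rule Opt3_better[OF o3 o2'] \<open>niso Q' \<le> niso Q\<close>)+
  show keep: "\<forall>q\<in>Q. q \<noteq> [z] \<longrightarrow> q \<noteq> p \<longrightarrow> q \<in> Q'" unfolding Q'_def by blast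
  have uM: "u \<in> M Q" unfolding M_def using pQ pe nab symE by blast
  show "M Q' = M Q"
  proof
    show "M Q' \<subseteq> M Q"
    proof
      fix x assume "x \<in> M Q'"
      then obtain a' b' where ab': "[a',x,b'] \<in> Q'" "\<not> E a' b'" unfolding M_def by blast
      show "x \<in> M Q"
      proof (cases "[a',x,b'] = [z,u,b]")
        case True then show ?thesis using uM by simp
      next
        case False
        then have "[a',x,b'] \<in> Q" using ab'(1) unfolding Q'_def by auto
        then show ?thesis using ab'(2) unfolding M_def by blast
      qed
    qed
  next
    show "M Q \<subseteq> M Q'"
    proof
      fix x assume "x \<in> M Q"
      then obtain a' b' where ab': "[a',x,b'] \<in> Q" "\<not> E a' b'" unfolding M_def by blast
      show "x \<in> M Q'"
      proof (cases "[a',x,b'] = p")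
        case True
        then have "x = u" using pe by auto
        moreover have "[z,u,b] \<in> Q'" unfolding Q'_def by simp
        ultimately show ?thesis using nzb unfolding M_def by blast
      next
        case False
        then have "[a',x,b'] \<in> Q'" using keep ab'(1) by simp
        then show ?thesis using ab'(2) unfolding M_def by blast
      qed
    qed
  qed
qed

end



locale G2 = G +
  fixes P :: "'a list set" and v0 :: 'a
  assumes oP: "Opt3 P" and v0P: "[v0] \<in> P"
begin

lemma ppP: "path_partition V E P" using Opt3_pp[OF oP] .

primrec Yn :: "nat \<Rightarrow> 'a set" where
  "Yn 0 = {y. [y] \<in> P}"
| "Yn (Suc n) = Yn n \<union> {e. \<exists>u y a b. y \<in> Yn n \<and> E y u \<and> [a,u,b] \<in> P \<and> \<not> E a b \<and> (e = a \<or> e = b)}"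

lemma Yn_mono: "m \<le> n \<Longrightarrow> Yn m \<subseteq> Yn n"
proof (induction n)
  case 0 then show ?case by simp
next
  case (Suc n)
  then show ?case by (cases "m = Suc n") auto
qed

lemma Yn_V: "Yn n \<subseteq> V"
proof (induction n)
  case 0
  show ?case
  proof
    fix x assume "x \<in> Yn 0"
    then have "[x] \<in> P" by simp
    from comp_path[OF ppP this] show "x \<in> V" unfolding is_path_def by simp
  qed
next
  case (Suc n)
  have "a \<in> V \<and> b \<in> V" if "[a,u,b] \<in> P" for a u b
    using comp_path[OF ppP that] unfolding is_path_def by auto
  then show ?case using Suc by auto
qed

definition Wit :: "nat \<Rightarrow> 'a \<Rightarrow> 'a list set \<Rightarrow> bool" where
  "Wit n y Q \<longleftrightarrow> Opt3 Q \<and> M Q = M P \<and> [y] \<in> Q \<and>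
     (\<forall>a u b. [a,u,b] \<in> P \<and> \<not> E a b \<longrightarrow> [a,u,b] \<in> Q \<or> (a \<in> Yn n \<and> b \<in> Yn n))"

lemma Wit_mono: "Wit n y Q \<Longrightarrow> Wit (Suc n) y Q"
proof -
  assume w: "Wit n y Q"
  have s: "Yn n \<subseteq> Yn (Suc n)" by simp
  show ?thesis using w s unfolding Wit_def by blast
qed

lemma wit_step:
  assumes W: "Wit n y Q" and y: "y \<in> Yn n" and yu: "E y u" and aP: "[a,u,b] \<in> P" and nab: "\<not> E a b"
    and aQ: "[a,u,b] \<in> Q" and cc: "(c = a \<and> c' = b) \<or> (c = b \<and> c' = a)"
  shows "\<exists>Q'. Wit (Suc n) c Q'"
proof -
  have o3: "Opt3 Q" and MQ: "M Q = M P" and yQ: "[y] \<in> Q"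
    and cond: "\<forall>a u b. [a,u,b] \<in> P \<and> \<not> E a b \<longrightarrow> [a,u,b] \<in> Q \<or> (a \<in> Yn n \<and> b \<in> Yn n)"
    using W unfolding Wit_def by auto
  have pe: "[a,u,b] = [c,u,c'] \<or> [a,u,b] = [c',u,c]" using cc by auto
  have ncc: "\<not> E c c'" using cc nab symE by blast
  define Q' where "Q' = (Q - {[y], [a,u,b]}) \<union> {[c], [y,u,c']}"
  note sw = swap[OF o3 yQ yu aQ pe ncc, folded Q'_def]
  have abY: "a \<in> Yn (Suc n)" "b \<in> Yn (Suc n)" using y yu aP nab by auto
  have "Wit (Suc n) c Q'"
    unfolding Wit_def
  proof (intro conjI allI impI)
    show "Opt3 Q'" by (rule sw(1))
    show "M Q' = M P" using sw(2) MQ by simp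
    show "[c] \<in> Q'" unfolding Q'_def by simp
    fix a2 u2 b2 assume h: "[a2,u2,b2] \<in> P \<and> \<not> E a2 b2"
    show "[a2,u2,b2] \<in> Q' \<or> (a2 \<in> Yn (Suc n) \<and> b2 \<in> Yn (Suc n))"
    proof (cases "[a2,u2,b2] = [a,u,b]")
      case True then show ?thesis using abY by simp
    next
      case False
      show ?thesis
      proof (cases "[a2,u2,b2] \<in> Q")
        case True
        then have "[a2,u2,b2] \<in> Q'" using sw(3) False by simp
        then show ?thesis by simp
      next
        case nq: False
        then have "a2 \<in> Yn n \<and> b2 \<in> Yn n" using cond h by blast
        then show ?thesis by simp
      qed
    qed
  qed
  then show ?thesis by blast
qed

lemma wit: "y \<in> Yn n \<Longrightarrow> \<exists>Q. Wit n y Q"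
proof (induction n arbitrary: y)
  case 0
  have "Wit 0 y P" unfolding Wit_def using oP 0 by simp
  then show ?case by blast
next
  case (Suc n)
  show ?case
  proof (cases "y \<in> Yn n")
    case True
    then show ?thesis using Suc.IH Wit_mono by blast
  next
    case False
    then obtain u y0 a b where h: "y0 \<in> Yn n" "E y0 u" "[a,u,b] \<in> P" "\<not> E a b" "y = a \<or> y = b"
      using Suc.prems by auto
    obtain Q where Q: "Wit n y0 Q" using Suc.IH[OF h(1)] by blast
    have cond: "[a,u,b] \<in> Q \<or> (a \<in> Yn n \<and> b \<in> Yn n)"
      using Q h(3,4) unfolding Wit_def by blast
    show ?thesis
    proof (cases "[a,u,b] \<in> Q")
      case True
      have cc: "(y = a \<and> (if y = a then b else a) = b) \<or> (y = b \<and> (if y = a then b else a) = a)"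
        using h(5) by auto
      show ?thesis by (rule wit_step[OF Q h(1,2,3,4) True cc])
    next
      case nq: False
      then have "y \<in> Yn n" using cond h(5) by auto
      with False show ?thesis by simp
    qed
  qed
qed

lemma nbrY: "y \<in> Yn n \<Longrightarrow> E y u \<Longrightarrow> u \<in> M P"
proof -
  assume "y \<in> Yn n" "E y u"
  obtain Q where "Wit n y Q" using wit[OF \<open>y \<in> Yn n\<close>] by blast
  then have "Opt3 Q" "M Q = M P" "[y] \<in> Q" unfolding Wit_def by auto
  from nbr[OF this(1,3) \<open>E y u\<close>] have "u \<in> M Q" unfolding M_def by blast
  with \<open>M Q = M P\<close> show ?thesis by simp
qed

lemma stab: "\<exists>N. Yn (Suc N) = Yn N"
proof (rule ccontr)
  assume "\<not> ?thesis"
  then have ne: "Yn (Suc n) \<noteq> Yn n" for n by blast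
  have "n \<le> card (Yn n)" for n
  proof (induction n)
    case 0 then show ?case by simp
  next
    case (Suc n)
    have sub: "Yn n \<subseteq> Yn (Suc n)" by (rule Yn_mono) simp
    have "Yn n \<subset> Yn (Suc n)" using sub ne[of n] by blast
    moreover have "finite (Yn (Suc n))" using Yn_V finV finite_subset by blast
    ultimately have "card (Yn n) < card (Yn (Suc n))" by (rule psubset_card_mono[rotated])
    then show ?case using Suc by simp
  qed
  moreover have "card (Yn n) \<le> card V" for n using Yn_V finV card_mono by blast
  ultimately have "Suc (card V) \<le> card V" by (meson order_trans)
  then show False by simp
qed

lemma contradiction: False
proof -
  obtain N where N: "Yn (Suc N) = Yn N" using stab by blast
  define Y where "Y = Yn N"
  define Nb where "Nb = {u. \<exists>y\<in>Y. E y u}"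
  have YV: "Y \<subseteq> V" unfolding Y_def by (rule Yn_V)
  have fY: "finite Y" using YV finV finite_subset by blast
  have NbV: "Nb \<subseteq> V" unfolding Nb_def using inV2 by blast
  have fN: "finite Nb" using NbV finV finite_subset by blast
  have NbM: "u \<in> M P" if "u \<in> Nb" for u using that nbrY unfolding Nb_def Y_def by blast
  define ends where "ends u = {e. \<exists>a b. [a,u,b] \<in> P \<and> \<not> E a b \<and> (e = a \<or> e = b)}" for u
  have ends2: "card (ends u) = 2" if uN: "u \<in> Nb" for u
  proof -
    obtain a b where ab: "[a,u,b] \<in> P" "\<not> E a b" using NbM[OF uN] unfolding M_def by blast
    have "ends u = {a,b}"
    proof
      show "{a,b} \<subseteq> ends u" using ab unfolding ends_def by blast
      show "ends u \<subseteq> {a,b}"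
      proof
        fix e assume "e \<in> ends u"
        then obtain a' b' where h: "[a',u,b'] \<in> P" "e = a' \<or> e = b'" unfolding ends_def by blast
        have "[a',u,b'] = [a,u,b]" using pp_unique[OF ppP h(1) ab(1), of u] by simp
        then show "e \<in> {a,b}" using h(2) by simp
      qed
    qed
    moreover have "a \<noteq> b" using comp_path[OF ppP ab(1)] unfolding is_path_def by auto
    ultimately show ?thesis by simp
  qed
  have endsY: "ends u \<subseteq> Y" if uN: "u \<in> Nb" for u
  proof
    fix e assume "e \<in> ends u"
    then obtain a b where h: "[a,u,b] \<in> P" "\<not> E a b" "e = a \<or> e = b" unfolding ends_def by blast
    obtain y where "y \<in> Y" "E y u" using uN unfolding Nb_def by blast
    then have "e \<in> Yn (Suc N)" using h unfolding Y_def by auto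
    then have "e \<in> Yn N" using N by (simp del: Yn.simps)
    then show "e \<in> Y" unfolding Y_def .
  qed
  have ends_dis: "ends u \<inter> ends u' = {}" if "u \<in> Nb" "u' \<in> Nb" "u \<noteq> u'" for u u'
  proof (rule equals0I)
    fix e assume "e \<in> ends u \<inter> ends u'"
    then obtain a b a' b' where h: "[a,u,b] \<in> P" "e = a \<or> e = b" "[a',u',b'] \<in> P" "e = a' \<or> e = b'"
      unfolding ends_def by blast
    have "e \<in> set [a,u,b]" "e \<in> set [a',u',b']" using h by auto
    from pp_unique[OF ppP h(1) h(3) this] have "u = u'" by simp
    with that show False by simp
  qed
  define EndS where "EndS = (\<Union>u\<in>Nb. ends u)"
  have fE: "\<forall>u\<in>Nb. finite (ends u)"
  proof
    fix u assume "u \<in> Nb"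
    then have "card (ends u) = 2" by (rule ends2)
    then show "finite (ends u)" by (intro card_ge_0_finite) simp
  qed
  have cE: "card EndS = 2 * card Nb"
  proof -
    have "card EndS = (\<Sum>u\<in>Nb. card (ends u))"
      unfolding EndS_def by (rule card_UN_disjoint[OF fN fE]) (use ends_dis in blast)
    also have "\<dots> = (\<Sum>u\<in>Nb. 2)" using ends2 by simp
    finally show ?thesis by simp
  qed
  have Y0: "Yn 0 \<subseteq> Y" unfolding Y_def using Yn_mono by blast
  have dis0: "Yn 0 \<inter> EndS = {}"
  proof (rule equals0I)
    fix e assume e: "e \<in> Yn 0 \<inter> EndS"
    then have h0: "[e] \<in> P" by simp
    from e obtain u where "e \<in> ends u" unfolding EndS_def by blast
    then obtain a b where h1: "[a,u,b] \<in> P" "e = a \<or> e = b" unfolding ends_def by blast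
    note h = h0 h1
    have "e \<in> set [e]" "e \<in> set [a,u,b]" using h by auto
    from pp_unique[OF ppP h(1) h(2) this] show False by simp
  qed
  have fE2: "finite EndS" using fE fN unfolding EndS_def by blast
  have f0: "finite (Yn 0)" using Yn_V finV finite_subset by blast
  have "card (Yn 0 \<union> EndS) = card (Yn 0) + card EndS" using card_Un_disjoint[OF f0 fE2 dis0] .
  moreover have "Yn 0 \<union> EndS \<subseteq> Y" using Y0 endsY unfolding EndS_def by blast
  moreover have "card (Yn 0) \<ge> 1"
  proof -
    have "v0 \<in> Yn 0" using v0P by simp
    then have "card (Yn 0) \<noteq> 0" using f0 by auto
    then show ?thesis by simp
  qed
  ultimately have cY: "1 + 2 * card Nb \<le> card Y" using card_mono[OF fY, of "Yn 0 \<union> EndS"] cE by linarith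
  have degY: "card {u\<in>Nb. E y u} = d" if "y \<in> Y" for y
  proof -
    have "{u\<in>Nb. E y u} = {u\<in>V. E y u}" using that inV2 unfolding Nb_def by blast
    moreover have "y \<in> V" using that YV by blast
    ultimately show ?thesis using reg unfolding regular_def by simp
  qed
  have degN: "card {y\<in>Y. E y u} \<le> d" if "u \<in> Nb" for u
  proof -
    have "{y\<in>Y. E y u} \<subseteq> {y\<in>V. E u y}" using YV symE by blast
    moreover have "u \<in> V" using that NbV by blast
    moreover have "finite {y\<in>V. E u y}" using finV by simp
    ultimately have "card {y\<in>Y. E y u} \<le> card {y\<in>V. E u y}" by (intro card_mono)
    also have "card {y\<in>V. E u y} = d" using reg \<open>u \<in> V\<close> unfolding regular_def by blast
    finally show ?thesis .
  qed
  have "d * card Y = (\<Sum>y\<in>Y. card {u\<in>Nb. E y u})" using degY by simp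
  also have "\<dots> = (\<Sum>y\<in>Y. \<Sum>u\<in>Nb. if E y u then 1 else 0)"
    using card_filter_sum[OF fN] by simp
  also have "\<dots> = (\<Sum>u\<in>Nb. \<Sum>y\<in>Y. if E y u then 1 else 0)" by (rule sum.swap)
  also have "\<dots> = (\<Sum>u\<in>Nb. card {y\<in>Y. E y u})"
    using card_filter_sum[OF fY] by simp
  also have "\<dots> \<le> (\<Sum>u\<in>Nb. d)" by (rule sum_mono) (rule degN)
  also have "\<dots> = d * card Nb" by simp
  finally have "d * card Y \<le> d * card Nb" .
  moreover have "d * (1 + 2 * card Nb) \<le> d * card Y" using cY by (rule mult_le_mono2)
  ultimately have "d * (1 + 2 * card Nb) \<le> d * card Nb" by linarith
  then have "d + d * card Nb \<le> 0" by (simp add: algebra_simps)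
  then show False using d1 by simp
qed

end

theorem lemma6:
  fixes V :: "'a set" and E :: "'a \<Rightarrow> 'a \<Rightarrow> bool" and d :: nat
  assumes "1 \<le> d"
    and "simple_graph V E"
    and "regular V E d"
  shows "\<exists>P. canonical_path_partition V E P"
proof -
  interpret G V E d using assms by unfold_locales
  obtain P where oP: "Opt3 P" using ex_Opt3 by blast
  have o2: "Opt2 P" using oP unfolding Opt3_def by blast
  have o1: "Opt1 P" using o2 unfolding Opt2_def by blast
  show ?thesis
  proof (cases "\<exists>p\<in>P. isolated_vertex p")
    case True
    then obtain p where p: "p \<in> P" "length p = Suc 0" unfolding isolated_vertex_def by auto
    then obtain v0 where "p = [v0]" by (auto simp: length_Suc_conv)
    with p have v0P: "[v0] \<in> P" by simp
    interpret G2 V E d P v0 by unfold_locales (use assms oP v0P in auto)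
    from contradiction show ?thesis ..
  next
    case False
    have "canonical_path_partition V E P"
      unfolding canonical_path_partition_def
    proof (intro conjI allI impI)
      show "path_partition V E P" using o1 unfolding Opt1_def by blast
      fix Q assume "path_partition V E Q"
      then show "card P \<le> card Q" using o1 unfolding Opt1_def by blast
    next
      fix Q assume h: "path_partition V E Q \<and> card Q = card P"
      then have "Opt1 Q" using o1 unfolding Opt1_def by auto
      then show "num_cycle_components E Q \<le> num_cycle_components E P" using o2 unfolding Opt2_def by blast
    next
      show "\<forall>p\<in>P. \<not> isolated_vertex p" using False by blast
    qed
    then show ?thesis by blast
  qed
qed

end
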